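(* Consider the coupled opinion–network system described in the context with memory weight dynamics, and assume there is a constant $c>0$ with $\phi(r)>c$ for all $r\in[-2,2]$. Then the opinion diameter $D(t)=\max_{i,j}|x_j(t)-x_i(t)|$ satisfies, for all $t\ge0$, $D(t)\le \exp\big(-c^2(t+e^{-t}-1)\big)\,D(0)$.
   Context: There are $N$ individuals with opinions $x_i(t)\in[-1,1]$ and edge weights $w_{ij}(t)\in[0,1]$. The degree is $k_i=\sum_{j=1}^N w_{ij}$. With interaction function $\phi:[-2,2]\to[0,1]$, the system with memory weight dynamics is $\frac{dx_i}{dt}=\frac{1}{k_i}\sum_{j\neq i} w_{ij}\,\phi(x_j-x_i)(x_j-x_i)$, $\frac{dw_{ij}}{dt}=\phi(x_j-x_i)-w_{ij}$ for $i\neq j$, and $w_{ii}\equiv 1$. Standing assumptions: $\phi$ is Lipschitz continuous, even, and $\phi(0)>0$; $x_1(0)\le\dots\le x_N(0)$; $w_{ii}=1$; the initial network $w(0)$ is strongly connected. *)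

theory Defs
  imports "HOL-Analysis.Analysis"
begin

text \<open>Individuals are indexed by 0..<N. Opinions: x t i; weights: w t i j.\<close>

definition degree :: "nat \<Rightarrow> (nat \<Rightarrow> nat \<Rightarrow> real) \<Rightarrow> nat \<Rightarrow> real" where
  "degree N W i = (\<Sum>j<N. W i j)"

definition edge_rel :: "nat \<Rightarrow> (nat \<Rightarrow> nat \<Rightarrow> real) \<Rightarrow> (nat \<times> nat) set" where
  "edge_rel N W = {(i, j). i < N \<and> j < N \<and> W i j > 0}"

definition strongly_connected_net :: "nat \<Rightarrow> (nat \<Rightarrow> nat \<Rightarrow> real) \<Rightarrow> bool" where
  "strongly_connected_net N W \<longleftrightarrow> (\<forall>i<N. \<forall>j<N. (i, j) \<in> (edge_rel N W)\<^sup>*)"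

definition opinion_diameter :: "nat \<Rightarrow> (nat \<Rightarrow> real) \<Rightarrow> real" where
  "opinion_diameter N X = Max {\<bar>X j - X i\<bar> | i j. i < N \<and> j < N}"

end

theory Submission
  imports Defs
begin


lemma max_principle:
  fixes f :: "'k \<Rightarrow> real \<Rightarrow> real" and f' :: "'k \<Rightarrow> real \<Rightarrow> real"
  assumes K: "finite K"
    and deriv: "\<And>k t. k \<in> K \<Longrightarrow> t \<ge> 0 \<Longrightarrow> (f k has_real_derivative f' k t) (at t within {0..})"
    and init: "\<And>k. k \<in> K \<Longrightarrow> f k 0 \<le> M"
    and key: "\<And>k t. k \<in> K \<Longrightarrow> t \<ge> 0 \<Longrightarrow> (\<And>l. l \<in> K \<Longrightarrow> f l t \<le> f k t) \<Longrightarrow> f' k t \<le> 0"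
    and kK: "k \<in> K" and T: "T \<ge> 0"
  shows "f k T \<le> M"
proof -
  have cont: "continuous_on {0..T} (f l)" if "l \<in> K" for l
  proof (rule DERIV_continuous_on)
    fix t assume "t \<in> {0..T}"
    show "(f l has_field_derivative f' l t) (at t within {0..T})"
      proof (rule DERIV_subset)
      show "(f l has_field_derivative f' l t) (at t within {0..})" using deriv[OF that, of t] \<open>t \<in> {0..T}\<close> by auto
    qed auto
  qed
  have main: "f k T < M + e*(1+T)" if e: "e>0" for e
  proof (rule ccontr)
    assume nt: "\<not> ?thesis"
    define g where "g s = M + e*(1+s)" for s
    define C where "C = (\<Union>l\<in>K. {0..T} \<inter> (\<lambda>s. f l s - g s) -` {0..})"
    have closedC: "closed C" unfolding C_def
    proof (intro closed_UN[OF K] ballI)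
      fix l assume "l \<in> K"
      have "continuous_on {0..T} (\<lambda>s. f l s - g s)" unfolding g_def
        by (intro continuous_intros cont[OF \<open>l \<in> K\<close>])
      then show "closed ({0..T} \<inter> (\<lambda>s. f l s - g s) -` {0..})"
        by (rule continuous_closed_preimage) auto
    qed
    have TC: "T \<in> C" using nt kK T unfolding C_def g_def by (auto intro!: bexI[of _ k])
    have bdd: "bdd_below C" unfolding C_def by (rule bdd_belowI[of _ 0]) auto
    define ts where "ts = Inf C"
    have "ts \<in> C" unfolding ts_def using closed_contains_Inf[OF _ bdd closedC] TC by auto
    then obtain l where l: "l\<in>K" "0 \<le> ts" "ts \<le> T" "f l ts \<ge> g ts"
      unfolding C_def by auto
    have tspos: "ts > 0"
    proof (rule ccontr)
      assume "\<not> ts > 0" then have "ts = 0" using l by auto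
      then show False using l init[OF l(1)] e unfolding g_def by auto
    qed
    define m where "m = Max ((\<lambda>l. f l ts) ` K)"
    have "m \<in> (\<lambda>l. f l ts) ` K" unfolding m_def using K l(1) by (intro Max_in) auto
    then obtain k where k: "k \<in> K" "f k ts = m" by auto
    have kmax: "f j ts \<le> f k ts" if "j \<in> K" for j
      using k K that unfolding m_def by auto
    have d: "f' k ts \<le> 0" using key[OF k(1) l(2) kmax] .
    have gk: "f k ts \<ge> g ts" using kmax[OF l(1)] l(4) by auto
    have "at ts within {0..} = at ts"
      by (rule at_within_interior) (use tspos interior_real_atLeast in auto)
    then have "((\<lambda>s. (f k s - f k ts)/(s - ts)) \<longlongrightarrow> f' k ts) (at ts)"
      using deriv[OF k(1) l(2)] by (simp add: has_field_derivative_iff)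
    then have lim: "((\<lambda>s. (f k s - f k ts)/(s - ts)) \<longlongrightarrow> f' k ts) (at_left ts)"
      by (rule tendsto_mono[rotated]) (simp add: at_le)
    have "eventually (\<lambda>s. (f k s - f k ts)/(s - ts) < e) (at_left ts)"
      using order_tendstoD(2)[OF lim] d e by auto
    moreover have "eventually (\<lambda>s. s \<in> {0<..<ts}) (at_left ts)"
      using eventually_at_left_real[OF tspos] .
    ultimately have ev: "eventually (\<lambda>s. (f k s - f k ts)/(s - ts) < e \<and> s \<in> {0<..<ts}) (at_left ts)"
      by (rule eventually_conj)
    then obtain s where s: "(f k s - f k ts)/(s - ts) < e" "0 < s" "s < ts"
      using eventually_happens[OF ev] trivial_limit_at_left_real by auto
    have "e * (s - ts) < f k s - f k ts" using s(1) s(3) by (simp add: neg_divide_less_eq)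
    then have "f k s \<ge> g s" using gk unfolding g_def by (simp add: algebra_simps)
    then have "s \<in> C" unfolding C_def using k(1) s l(3) by auto
    then have "ts \<le> s" unfolding ts_def using bdd by (rule cInf_lower)
    then show False using s by auto
  qed
  show ?thesis
  proof (rule field_le_epsilon)
    fix e :: real assume "e > 0"
    then show "f k T \<le> M + e" using main[of "e/(1+T)"] T by auto
  qed
qed


lemma sum_bound:
  fixes A :: "nat set" and w p d :: "nat \<Rightarrow> real"
  assumes A: "finite A" and d: "\<forall>l\<in>A. d l \<le> 0" and w: "\<forall>l\<in>A. a \<le> w l"
    and p: "\<forall>l\<in>A. c < p l" and c: "0 < c" and a: "0 \<le> a" and k: "1 \<le> k" "k \<le> real N"
  shows "(1/k) * (\<Sum>l\<in>A. w l * p l * d l) \<le> (a*c/N) * (\<Sum>l\<in>A. d l)"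
proof -
  have t: "w l * p l * d l \<le> a * c * d l" if "l \<in> A" for l
  proof -
    have "a * c \<le> w l * p l" using w p c a that by (intro mult_mono) auto
    then show ?thesis using d that by (intro mult_right_mono_neg) auto
  qed
  have S: "(\<Sum>l\<in>A. w l * p l * d l) \<le> a * c * (\<Sum>l\<in>A. d l)"
    unfolding sum_distrib_left by (rule sum_mono) (use t in auto)
  have S0: "a * c * (\<Sum>l\<in>A. d l) \<le> 0"
    using d a c by (intro mult_nonneg_nonpos) (auto intro: sum_nonpos)
  have "(1/k) * (\<Sum>l\<in>A. w l * p l * d l) \<le> (1/k) * (a * c * (\<Sum>l\<in>A. d l))"
    using S k by (intro mult_left_mono) auto
  also have "\<dots> \<le> (1/N) * (a * c * (\<Sum>l\<in>A. d l))"
    using S0 k by (intro mult_right_mono_neg) (auto simp: frac_le)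
  finally show ?thesis by simp
qed


lemma diam_props:
  fixes X :: "nat \<Rightarrow> real"
  assumes "N \<ge> 1"
  shows "\<forall>i<N. \<forall>j<N. \<bar>X j - X i\<bar> \<le> opinion_diameter N X"
    and "\<exists>i<N. \<exists>j<N. opinion_diameter N X = \<bar>X j - X i\<bar>"
proof -
  have eq: "{\<bar>X j - X i\<bar> | i j. i < N \<and> j < N} = (\<lambda>(i,j). \<bar>X j - X i\<bar>) ` ({..<N}\<times>{..<N})"
    by auto
  have fin: "finite {\<bar>X j - X i\<bar> | i j. i < N \<and> j < N}" unfolding eq by auto
  have ne: "{\<bar>X j - X i\<bar> | i j. i < N \<and> j < N} \<noteq> {}" using assms by (auto intro!: exI[of _ 0])
  show "\<forall>i<N. \<forall>j<N. \<bar>X j - X i\<bar> \<le> opinion_diameter N X"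
    unfolding opinion_diameter_def using fin by (auto intro!: Max_ge)
  have "opinion_diameter N X \<in> {\<bar>X j - X i\<bar> | i j. i < N \<and> j < N}"
    unfolding opinion_diameter_def using fin ne by (rule Max_in)
  then show "\<exists>i<N. \<exists>j<N. opinion_diameter N X = \<bar>X j - X i\<bar>" by auto
qed

lemma w_lower:
  fixes h :: "real \<Rightarrow> real" and q :: "real \<Rightarrow> real"
  assumes t: "t \<ge> 0" and h0: "h 0 \<ge> 0"
    and hd: "\<forall>s\<ge>0. (h has_real_derivative (q s - h s)) (at s within {0..})"
    and q: "\<forall>s\<ge>0. q s > c"
  shows "c * (1 - exp (-t)) \<le> h t"
proof -
  define g where "g s = exp s * h s - c * exp s" for s
  have gd: "(g has_real_derivative (exp s * (q s - c))) (at s within {0..})" if "s \<ge> 0" for s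
    unfolding g_def using hd that
    by (auto intro!: derivative_eq_intros simp: algebra_simps)
  have "g 0 \<le> g t"
  proof (rule DERIV_nonneg_imp_increasing_open[OF t])
    fix s assume s: "0 < s" "s < t"
    have "at s within {0..} = at s"
      by (rule at_within_interior) (use s interior_real_atLeast in auto)
    then show "\<exists>y. (g has_real_derivative y) (at s) \<and> 0 \<le> y"
      proof (intro exI conjI)
      show "(g has_real_derivative exp s * (q s - c)) (at s)" using gd[of s] s \<open>at s within {0..} = at s\<close> by auto
      show "0 \<le> exp s * (q s - c)" using q s by (intro mult_nonneg_nonneg) (auto simp: less_imp_le)
    qed
  next
    show "continuous_on {0..t} g"
    proof (rule DERIV_continuous_on)
      fix s assume "s \<in> {0..t}"
      show "(g has_field_derivative exp s * (q s - c)) (at s within {0..t})"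
        by (rule DERIV_subset[OF gd]) (use \<open>s \<in> {0..t}\<close> in auto)
    qed
  qed
  then have "h 0 - c \<le> exp t * h t - c * exp t" unfolding g_def by simp
  then have "c * exp t - c \<le> exp t * h t" using h0 by linarith
  then have "exp (-t) * (c * exp t - c) \<le> exp (-t) * (exp t * h t)"
    by (intro mult_left_mono) auto
  then show ?thesis by (simp add: algebra_simps exp_minus_inverse exp_minus field_simps)
qed




theorem proposition2:
  fixes N :: nat and \<phi> :: "real \<Rightarrow> real" and c :: real
    and x :: "real \<Rightarrow> nat \<Rightarrow> real" and w :: "real \<Rightarrow> nat \<Rightarrow> nat \<Rightarrow> real"
  assumes N_pos: "N \<ge> 1"
    and phi_range: "\<forall>r\<in>{-2..2}. 0 \<le> \<phi> r \<and> \<phi> r \<le> 1"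
    and phi_lip: "\<exists>L. L-lipschitz_on {-2..2} \<phi>"
    and phi_even: "\<forall>r\<in>{-2..2}. \<phi> (-r) = \<phi> r"
    and phi_0: "\<phi> 0 > 0"
    and c_pos: "c > 0"
    and phi_c: "\<forall>r\<in>{-2..2}. \<phi> r > c"
    and x_range: "\<forall>t\<ge>0. \<forall>i<N. x t i \<in> {-1..1}"
    and w_range: "\<forall>t\<ge>0. \<forall>i<N. \<forall>j<N. w t i j \<in> {0..1}"
    and w_diag: "\<forall>t\<ge>0. \<forall>i<N. w t i i = 1"
    and x_sorted: "\<forall>i j. i \<le> j \<longrightarrow> j < N \<longrightarrow> x 0 i \<le> x 0 j"
    and w0_sc: "strongly_connected_net N (w 0)"
    and x_ode: "\<forall>t\<ge>0. \<forall>i<N.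
        ((\<lambda>s. x s i) has_real_derivative
          (1 / degree N (w t) i) *
            (\<Sum>j\<in>{..<N} - {i}. w t i j * \<phi> (x t j - x t i) * (x t j - x t i)))
        (at t within {0..})"
    and w_ode: "\<forall>t\<ge>0. \<forall>i<N. \<forall>j<N. i \<noteq> j \<longrightarrow>
        ((\<lambda>s. w s i j) has_real_derivative (\<phi> (x t j - x t i) - w t i j))
        (at t within {0..})"
  shows "\<forall>t\<ge>0. opinion_diameter N (x t)
           \<le> exp (- (c\<^sup>2 * (t + exp (- t) - 1))) * opinion_diameter N (x 0)"
  proof -
  have c1: "c < 1" using phi_c phi_range by force
  have xdiff: "x t j - x t i \<in> {-2..2}" if "t \<ge> 0" "i < N" "j < N" for t i j
  proof -
    have "x t j \<in> {-1..1}" "x t i \<in> {-1..1}" using x_range that by auto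
    then show ?thesis by auto
  qed
  have wlow: "c * (1 - exp (-t)) \<le> w t i j" if t: "t \<ge> 0" and ij: "i < N" "j < N" for t i j
  proof (cases "i = j")
    case True
    have "c * (1 - exp (-t)) \<le> c * 1" using c_pos by (intro mult_left_mono) auto
    then show ?thesis using True w_diag t ij c1 by auto
  next
    case False
    show ?thesis
    proof (rule w_lower[where q="\<lambda>s. \<phi> (x s j - x s i)"])
      show "0 \<le> w 0 i j" using w_range ij by auto
      show "\<forall>s\<ge>0. ((\<lambda>s. w s i j) has_real_derivative \<phi> (x s j - x s i) - w s i j) (at s within {0..})"
        using w_ode ij False by auto
      show "\<forall>s\<ge>0. c < \<phi> (x s j - x s i)" using phi_c xdiff ij by auto
    qed (use t in auto)
  qed
  have deg: "1 \<le> degree N (w t) i \<and> degree N (w t) i \<le> real N" if "t \<ge> 0" "i < N" for t i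
  proof
    have "w t i i \<le> (\<Sum>j<N. w t i j)"
      using that w_range by (intro member_le_sum) auto
    then show "1 \<le> degree N (w t) i" unfolding degree_def using w_diag that by auto
    have "(\<Sum>j<N. w t i j) \<le> (\<Sum>j<N. 1)" using that w_range by (intro sum_mono) auto
    then show "degree N (w t) i \<le> real N" unfolding degree_def by auto
  qed
  define xd' where "xd' t i = (1 / degree N (w t) i) *
     (\<Sum>j\<in>{..<N} - {i}. w t i j * \<phi> (x t j - x t i) * (x t j - x t i))" for t i
  have keyineq: "xd' t M - xd' t m \<le> - (c\<^sup>2 * (1 - exp (-t))) * (x t M - x t m)"
    if t: "t \<ge> 0" and Mm: "M < N" "m < N" and Mmax: "\<forall>l<N. x t l \<le> x t M"
      and mmin: "\<forall>l<N. x t m \<le> x t l" for t M m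
  proof -
    define a where "a = c * (1 - exp (-t))"
    have a0: "0 \<le> a" unfolding a_def using c_pos t by auto
    have h1: "xd' t M \<le> (a*c/N) * (\<Sum>l\<in>{..<N}-{M}. x t l - x t M)"
      unfolding xd'_def
      by (rule sum_bound) (use Mmax wlow[OF t Mm(1)] phi_c xdiff[OF t Mm(1)] c_pos a0 deg[OF t Mm(1)] in \<open>auto simp: a_def\<close>)
    have h2: "(1 / degree N (w t) m) * (\<Sum>l\<in>{..<N}-{m}. w t m l * \<phi> (x t l - x t m) * (-(x t l - x t m)))
       \<le> (a*c/N) * (\<Sum>l\<in>{..<N}-{m}. -(x t l - x t m))"
      by (rule sum_bound) (use mmin wlow[OF t Mm(2)] phi_c xdiff[OF t Mm(2)] c_pos a0 deg[OF t Mm(2)] in \<open>auto simp: a_def\<close>)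
    have h2': "(a*c/N) * (\<Sum>l\<in>{..<N}-{m}. x t l - x t m) \<le> xd' t m"
    proof -
      have e1: "(\<Sum>l\<in>{..<N}-{m}. w t m l * \<phi> (x t l - x t m) * (-(x t l - x t m)))
          = - (\<Sum>l\<in>{..<N}-{m}. w t m l * \<phi> (x t l - x t m) * (x t l - x t m))"
        by (subst sum_negf[symmetric]) (rule sum.cong, auto simp: algebra_simps)
      have e2: "(\<Sum>l\<in>{..<N}-{m}. -(x t l - x t m)) = - (\<Sum>l\<in>{..<N}-{m}. x t l - x t m)"
        by (rule sum_negf)
      show ?thesis using h2 unfolding e1 e2 xd'_def by simp
    qed
    have s1: "(\<Sum>l\<in>{..<N}-{M}. x t l - x t M) = (\<Sum>l<N. x t l - x t M)"
      using Mm by (simp add: sum_diff1)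
    have s2: "(\<Sum>l\<in>{..<N}-{m}. x t l - x t m) = (\<Sum>l<N. x t l - x t m)"
      using Mm by (simp add: sum_diff1)
    have s3: "(\<Sum>l<N. x t l - x t M) - (\<Sum>l<N. x t l - x t m) = real N * (x t m - x t M)"
      by (simp add: sum_subtractf[symmetric])
    have "xd' t M - xd' t m \<le> (a*c/N) * ((\<Sum>l<N. x t l - x t M) - (\<Sum>l<N. x t l - x t m))"
      using h1 h2' s1 s2 by (simp add: right_diff_distrib)
    also have "\<dots> = (a*c/N) * (real N * (x t m - x t M))" using s3 by simp
    also have "\<dots> = - (c\<^sup>2 * (1 - exp (-t))) * (x t M - x t m)"
      using N_pos unfolding a_def by (simp add: field_simps power2_eq_square)
    finally show ?thesis .
  qed
  define E where "E t = exp (c\<^sup>2 * (t + exp (-t) - 1))" for t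
  have Epos: "E t > 0" for t unfolding E_def by simp
  have E0: "E 0 = 1" unfolding E_def by simp
  have Ed: "(E has_real_derivative E t * (c\<^sup>2 * (1 - exp (-t)))) (at t within {0..})" for t
    unfolding E_def by (auto intro!: derivative_eq_intros simp: algebra_simps)
  define D0 where "D0 = opinion_diameter N (x 0)"
  have bound: "(x T (snd k) - x T (fst k)) * E T \<le> D0"
    if kK: "k \<in> {..<N} \<times> {..<N}" and T: "T \<ge> 0" for k T
  proof (rule max_principle[where f="\<lambda>k t. (x t (snd k) - x t (fst k)) * E t"
        and f'="\<lambda>k t. (xd' t (snd k) - xd' t (fst k)) * E t + (x t (snd k) - x t (fst k)) * (E t * (c\<^sup>2 * (1 - exp (-t))))"
        and K="{..<N} \<times> {..<N}", OF _ _ _ _ kK T])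
    show "finite ({..<N} \<times> {..<N})" by auto
  next
    fix k and t :: real assume k: "k \<in> {..<N} \<times> {..<N}" and t: "0 \<le> t"
    have dj: "((\<lambda>s. x s (snd k)) has_real_derivative xd' t (snd k)) (at t within {0..})"
      using x_ode k t unfolding xd'_def by auto
    have di: "((\<lambda>s. x s (fst k)) has_real_derivative xd' t (fst k)) (at t within {0..})"
      using x_ode k t unfolding xd'_def by auto
    show "((\<lambda>t. (x t (snd k) - x t (fst k)) * E t) has_real_derivative
        (xd' t (snd k) - xd' t (fst k)) * E t + (x t (snd k) - x t (fst k)) * (E t * (c\<^sup>2 * (1 - exp (-t)))))
        (at t within {0..})"
      using DERIV_mult[OF DERIV_diff[OF dj di] Ed] by (simp add: algebra_simps)
  next
    fix k assume k: "k \<in> {..<N} \<times> {..<N}"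
    show "(x 0 (snd k) - x 0 (fst k)) * E 0 \<le> D0"
      using diam_props(1)[OF N_pos, of "x 0"] k unfolding E0 D0_def by force
  next
    fix k and t :: real assume k: "k \<in> {..<N} \<times> {..<N}" and t: "0 \<le> t"
      and mx: "\<And>l. l \<in> {..<N} \<times> {..<N} \<Longrightarrow> (x t (snd l) - x t (fst l)) * E t \<le> (x t (snd k) - x t (fst k)) * E t"
    have mx': "x t (snd l) - x t (fst l) \<le> x t (snd k) - x t (fst k)" if "l \<in> {..<N} \<times> {..<N}" for l
      using mx[OF that] Epos[of t] by auto
    have Mmax: "\<forall>l<N. x t l \<le> x t (snd k)"
      using mx'[of "(fst k, l)" for l] k by auto
    have mmin: "\<forall>l<N. x t (fst k) \<le> x t l"
      using mx'[of "(l, snd k)" for l] k by auto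
    have ki: "xd' t (snd k) - xd' t (fst k) \<le> - (c\<^sup>2 * (1 - exp (-t))) * (x t (snd k) - x t (fst k))"
      using keyineq[OF t _ _ Mmax mmin] k by auto
    have "(xd' t (snd k) - xd' t (fst k)) * E t + (x t (snd k) - x t (fst k)) * (E t * (c\<^sup>2 * (1 - exp (-t))))
        = E t * ((xd' t (snd k) - xd' t (fst k)) + (c\<^sup>2 * (1 - exp (-t))) * (x t (snd k) - x t (fst k)))"
      by (simp add: algebra_simps)
    also have "\<dots> \<le> 0" using ki Epos[of t] by (intro mult_nonneg_nonpos) auto
    finally show "(xd' t (snd k) - xd' t (fst k)) * E t + (x t (snd k) - x t (fst k)) * (E t * (c\<^sup>2 * (1 - exp (-t)))) \<le> 0" .
  qed
  show ?thesis
  proof (intro allI impI)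
    fix t :: real assume t: "t \<ge> 0"
    obtain i j where ij: "i < N" "j < N" "opinion_diameter N (x t) = \<bar>x t j - x t i\<bar>"
      using diam_props(2)[OF N_pos, of "x t"] by auto
    have b1: "(x t j - x t i) * E t \<le> D0" using bound[of "(i,j)" t] ij t by auto
    have b2: "(x t i - x t j) * E t \<le> D0" using bound[of "(j,i)" t] ij t by auto
    have "\<bar>x t j - x t i\<bar> * E t \<le> D0" using b1 b2 by (cases "x t j - x t i \<ge> 0") auto
    then have "\<bar>x t j - x t i\<bar> \<le> D0 / E t" using Epos[of t] by (simp add: field_simps)
    also have "D0 / E t = exp (- (c\<^sup>2 * (t + exp (- t) - 1))) * D0"
      unfolding E_def by (simp add: exp_minus field_simps)
    finally show "opinion_diameter N (x t) \<le> exp (- (c\<^sup>2 * (t + exp (- t) - 1))) * opinion_diameter N (x 0)"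
      using ij unfolding D0_def by simp
  qed
qed

end
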